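(* Let $\delta\ge1$ be an integer and $v\in V_\delta$. If a coalition structure $C^*$ of $N$ maximizes the social welfare $\mathsf{SW}(\cdot\mid v)$, then $|S|\le\delta$ for every $S\in C^*$.
   Context: Players: a finite set $N$. A characteristic function is $v:2^N\to\mathbb{R}_{\ge 0}$ with $v(\emptyset)=0$. There are fixed constants $0<\mathsf{min}\le\mathsf{max}$ and $v$ is monotone and bounded: $\mathsf{min}\le v(S)\le v(T)\le\mathsf{max}$ for all nonempty $S\subseteq T\subseteq N$. $V_\delta$ is the set of such $v$ with $\delta\cdot\mathsf{min}\le\mathsf{max}<(\delta+1)\cdot\mathsf{min}$. A coalition structure is a partition $C$ of $N$, with social welfare $\mathsf{SW}(C\mid v)=\sum_{S\in C}v(S)$. *)

theory Defs
  imports Complex_Main "HOL-Library.Disjoint_Sets"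
begin

definition char_fun :: "'a set \<Rightarrow> ('a set \<Rightarrow> real) \<Rightarrow> bool" where
  "char_fun N v \<longleftrightarrow> v {} = 0 \<and> (\<forall>S. S \<subseteq> N \<longrightarrow> 0 \<le> v S)"

definition mono_bounded :: "real \<Rightarrow> real \<Rightarrow> 'a set \<Rightarrow> ('a set \<Rightarrow> real) \<Rightarrow> bool" where
  "mono_bounded mn mx N v \<longleftrightarrow> 0 < mn \<and> mn \<le> mx \<and>
     (\<forall>S T. S \<noteq> {} \<and> S \<subseteq> T \<and> T \<subseteq> N \<longrightarrow> mn \<le> v S \<and> v S \<le> v T \<and> v T \<le> mx)"

definition V_delta :: "nat \<Rightarrow> real \<Rightarrow> real \<Rightarrow> 'a set \<Rightarrow> ('a set \<Rightarrow> real) set" where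
  "V_delta \<delta> mn mx N = {v. char_fun N v \<and> mono_bounded mn mx N v \<and>
      real \<delta> * mn \<le> mx \<and> mx < (real \<delta> + 1) * mn}"

definition coalition_structure :: "'a set \<Rightarrow> 'a set set \<Rightarrow> bool" where
  "coalition_structure N C \<longleftrightarrow> partition_on N C"

definition SW :: "'a set set \<Rightarrow> ('a set \<Rightarrow> real) \<Rightarrow> real" where
  "SW C v = (\<Sum>S\<in>C. v S)"

end

theory Submission
  imports Defs
begin

theorem lemma1:
  fixes N :: "'a set" and v :: "'a set \<Rightarrow> real" and \<delta> :: nat
    and mn mx :: real and Cstar :: "'a set set"
  assumes "finite N"
    and "\<delta> \<ge> 1"
    and "v \<in> V_delta \<delta> mn mx N"
    and "coalition_structure N Cstar"
    and "\<forall>C. coalition_structure N C \<longrightarrow> SW C v \<le> SW Cstar v"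
  shows "\<forall>S\<in>Cstar. card S \<le> \<delta>"
proof (rule ccontr)
  assume "\<not> (\<forall>S\<in>Cstar. card S \<le> \<delta>)"
  then obtain S where SC: "S \<in> Cstar" and cS: "card S \<ge> \<delta> + 1" by force
  have P: "partition_on N Cstar" using assms(4) by (simp add: coalition_structure_def)
  have SN: "S \<subseteq> N" using P SC by (auto simp: partition_on_def)
  have fS: "finite S" using SN assms(1) finite_subset by blast
  have fC: "finite Cstar" using finite_elements[OF assms(1) P] .
  have mb: "mono_bounded mn mx N v" and lo: "real \<delta> * mn \<le> mx" and hi: "mx < (real \<delta> + 1) * mn"
    using assms(3) by (auto simp: V_delta_def)
  have dj: "\<And>p q. p \<in> Cstar \<Longrightarrow> q \<in> Cstar \<Longrightarrow> p \<noteq> q \<Longrightarrow> p \<inter> q = {}"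
    using partition_onD2[OF P] disjointD by blast
  define D where "D = (\<lambda>x. {x}) ` S"
  define C' where "C' = (Cstar - {S}) \<union> D"
  have c2: "card S \<ge> 2" using cS assms(2) by linarith
  have disj: "(Cstar - {S}) \<inter> D = {}"
  proof (rule ccontr)
    assume "(Cstar - {S}) \<inter> D \<noteq> {}"
    then obtain x where x: "x \<in> S" "{x} \<in> Cstar" "{x} \<noteq> S" by (auto simp: D_def)
    have "{x} \<inter> S \<noteq> {}" using x(1) by blast
    hence "{x} = S" using dj[OF x(2) SC] by blast
    thus False using x(3) by blast
  qed
  have "partition_on N C'"
  proof (rule partition_onI)
    have "\<Union>Cstar = N" using P by (simp add: partition_on_def)
    thus "\<Union>C' = N" unfolding C'_def D_def using SC by blast
  next
    show "{} \<notin> C'" using P unfolding C'_def D_def partition_on_def by blast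
  next
    fix p q assume pq: "p \<in> C'" "q \<in> C'" "p \<noteq> q"
    show "disjnt p q"
    proof (cases "p \<in> D")
      case True
      then obtain x where px: "p = {x}" "x \<in> S" by (auto simp: D_def)
      show ?thesis
      proof (cases "q \<in> D")
        case True
        then obtain y where "q = {y}" by (auto simp: D_def)
        thus ?thesis using px pq(3) by (auto simp: disjnt_def)
      next
        case False
        hence "q \<in> Cstar" "q \<noteq> S" using pq(2) by (auto simp: C'_def)
        hence "q \<inter> S = {}" using dj SC by blast
        thus ?thesis using px by (auto simp: disjnt_def)
      qed
    next
      case False
      hence p: "p \<in> Cstar" "p \<noteq> S" using pq(1) by (auto simp: C'_def)
      hence pS: "p \<inter> S = {}" using dj SC by blast
      show ?thesis
      proof (cases "q \<in> D")
        case True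
        then obtain y where "q = {y}" "y \<in> S" by (auto simp: D_def)
        thus ?thesis using pS by (auto simp: disjnt_def)
      next
        case False
        hence "q \<in> Cstar" using pq(2) by (auto simp: C'_def)
        thus ?thesis using dj p pq(3) by (auto simp: disjnt_def)
      qed
    qed
  qed
  hence "SW C' v \<le> SW Cstar v" using assms(5) by (simp add: coalition_structure_def)
  moreover have "SW C' v = SW (Cstar - {S}) v + SW D v"
    unfolding SW_def C'_def
  proof (rule sum.union_disjoint)
    show "finite (Cstar - {S})" using fC by simp
    show "finite D" unfolding D_def using fS by simp
  qed (fact disj)
  moreover have "SW Cstar v = SW (Cstar - {S}) v + v S"
    unfolding SW_def using fC SC by (simp add: sum.remove)
  moreover have "SW D v = (\<Sum>x\<in>S. v {x})"
    unfolding SW_def D_def by (simp add: sum.reindex)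
  moreover have "(\<Sum>x\<in>S. v {x}) \<ge> (\<Sum>x\<in>S. mn)"
  proof (intro sum_mono)
    fix x assume "x \<in> S"
    hence "{x} \<noteq> {}" "{x} \<subseteq> {x}" "{x} \<subseteq> N" using SN by auto
    thus "mn \<le> v {x}" using mb unfolding mono_bounded_def by blast
  qed
  moreover have "v S \<le> mx"
  proof -
    have "S \<noteq> {}" using c2 by auto
    thus ?thesis using mb SN unfolding mono_bounded_def by blast
  qed
  moreover have "(\<Sum>x\<in>S. mn) \<ge> (real \<delta> + 1) * mn"
  proof -
    have "mn > 0" using mb by (simp add: mono_bounded_def)
    moreover have "real (card S) \<ge> real \<delta> + 1" using cS by simp
    ultimately show ?thesis by (simp add: mult_right_mono)
  qed
  ultimately show False using hi by linarith
qed

end
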